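(* When Alice and Bob share $\Theta(\log N)$ EPR pairs, there is a quantum protocol of cost $O(\log N)$ in the entangled-fingerprinting model for the $\mathsf{ABCD}$ problem on $N\times N$ matrices such that every \textsc{yes} instance is accepted (output 1) with probability at least $0.95$ and every \textsc{no} instance is accepted with probability at most $0.55$.
   Context: Throughout, $N=2^n$ for a positive integer $n$, and $\mathsf{SU}(N)$ denotes the group of $N\times N$ complex unitary matrices of determinant $1$. The $\mathsf{ABCD}$ problem: Alice is given $A,C\in\mathsf{SU}(N)$ explicitly and Bob is given $B,D\in\mathsf{SU}(N)$ explicitly; the required output is $1$ (a \textsc{yes} instance) if $\mathrm{Tr}(ABCD)\ge 0.9N$ and $0$ (a \textsc{no} instance) if $\mathrm{Tr}(ABCD)\le 0.1N$, promised that one of these holds. Quantum simultaneous model with entanglement: Alice and Bob share an input-independent entangled state; each applies a quantum operation depending on their own input to their part and sends all their qubits to a third party Charlie, who applies an input-independent projective measurement whose outcome is the output; the cost is the total number of qubits sent to Charlie. The entangled-fingerprinting model is the special case in which Alice and Bob use their entanglement to prepare a state of the form $\frac{1}{\sqrt{2N}}\sum_{i\in[N]}\big(\lvert 0_A 0_B\rangle\lvert u_i\rangle_A\lvert v_i\rangle_B+\lvert 1_A1_B\rangle\lvert u_i'\rangle_A\lvert v_i'\rangle_B\big)$, where the states $\lvert u_i\rangle,\lvert u_i'\rangle$ are held (prepared) by Alice and $\lvert v_i\rangle,\lvert v_i'\rangle$ by Bob, and send everything to Charlie; Charlie uncomputes the second qubit (obtaining $\frac{1}{\sqrt{2N}}\sum_i(\lvert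 0\rangle\lvert u_i\rangle\lvert v_i\rangle+\lvert1\rangle\lvert u_i'\rangle\lvert v_i'\rangle)$), performs a swap of the last two registers controlled on the first qubit, measures the first qubit in the Hadamard basis, and outputs $1$ iff the outcome is $\lvert +\rangle$ (possibly repeated in parallel with fresh copies, with the output computed from the swap-test statistics). *)

theory Defs
  imports "HOL-Analysis.Analysis"
begin

text \<open>Finite-dimensional complex matrices of varying size d are represented as
  functions nat => nat => complex, only the entries with both indices below d
  being relevant; vectors in C^d are functions nat => complex restricted to
  indices below d.\<close>

type_synonym cmat = "nat \<Rightarrow> nat \<Rightarrow> complex"

definition mmul :: "nat \<Rightarrow> cmat \<Rightarrow> cmat \<Rightarrow> cmat" where
  "mmul d X Y = (\<lambda>i j. \<Sum>k<d. X i k * Y k j)"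

definition mtrace :: "nat \<Rightarrow> cmat \<Rightarrow> complex" where
  "mtrace d X = (\<Sum>i<d. X i i)"

definition mdet :: "nat \<Rightarrow> cmat \<Rightarrow> complex" where
  "mdet d X = (\<Sum>p\<in>{p. p permutes {..<d}}. of_int (sign p) * (\<Prod>i<d. X i (p i)))"

definition is_unitary :: "nat \<Rightarrow> cmat \<Rightarrow> bool" where
  "is_unitary d U \<longleftrightarrow> (\<forall>i<d. \<forall>j<d. (\<Sum>k<d. cnj (U k i) * U k j) = (if i = j then 1 else 0))"

definition SU :: "nat \<Rightarrow> cmat set" where
  "SU d = {U. is_unitary d U \<and> mdet d U = 1}"

definition vnorm2 :: "nat \<Rightarrow> (nat \<Rightarrow> complex) \<Rightarrow> real" where
  "vnorm2 d u = (\<Sum>i<d. (cmod (u i))\<^sup>2)"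

text \<open>Shared input-independent entangled state: Alice and Bob each hold a register
  of q qubits (index x < 2^q for Alice, y < 2^q for Bob).  The k low-order qubits of
  Alice's register are maximally entangled with the k low-order qubits of Bob's
  register (k EPR pairs); all remaining qubits are ancillas in state |0>.
  Amplitude of |x>_A |y>_B.\<close>
definition epr_state :: "nat \<Rightarrow> nat \<Rightarrow> nat \<Rightarrow> complex" where
  "epr_state k x y = (if x < 2^k \<and> y = x then 1 / complex_of_real (sqrt (2^k)) else 0)"

definition joint_state :: "nat \<Rightarrow> nat \<Rightarrow> cmat \<Rightarrow> cmat \<Rightarrow> nat \<Rightarrow> nat \<Rightarrow> complex" where
  "joint_state q k UA UB x y =
     (\<Sum>x0<2^q. \<Sum>y0<2^q. UA x x0 * UB y y0 * epr_state k x0 y0)"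

text \<open>Register layout for the entangled-fingerprinting model: Alice's register of
  q = m+1 qubits is |a>|x'> with the first (control) qubit a = x mod 2 and the
  m-qubit register x' = x div 2, i.e. x = a + 2 x'; likewise for Bob.\<close>
definition fingerprint_form ::
  "nat \<Rightarrow> nat \<Rightarrow> (nat \<Rightarrow> nat \<Rightarrow> complex) \<Rightarrow> bool" where
  "fingerprint_form N m psi \<longleftrightarrow>
     (\<exists>u u' v v' :: nat \<Rightarrow> nat \<Rightarrow> complex.
        (\<forall>i<N. vnorm2 (2^m) (u i) = 1 \<and> vnorm2 (2^m) (u' i) = 1 \<and>
               vnorm2 (2^m) (v i) = 1 \<and> vnorm2 (2^m) (v' i) = 1) \<and>
        (\<forall>a<2. \<forall>b<2. \<forall>x<2^m. \<forall>y<2^m.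
           psi (a + 2 * x) (b + 2 * y) =
             1 / complex_of_real (sqrt (2 * real N)) *
             (\<Sum>i<N. (if a = 0 \<and> b = 0 then u i x * v i y else 0)
                    + (if a = 1 \<and> b = 1 then u' i x * v' i y else 0))))"

text \<open>Charlie's fixed measurement on the received state psi (Alice's register
  |a>|x'>, Bob's register |b>|y'>): uncompute Bob's control qubit (CNOT from a to b),
  swap the m-qubit registers controlled on a, measure a in the Hadamard basis,
  and output 1 iff the outcome is |+>.  Probability of outcome 1 (the amplitude
  of |+>|b'>|x'>|y'> after these steps is
  (psi(0,x',b',y') + psi(1,y',1-b',x'))/sqrt 2 for b' in {0,1}; the b' = 1 terms
  vanish for states of fingerprint form).\<close>
definition accept_prob :: "nat \<Rightarrow> (nat \<Rightarrow> nat \<Rightarrow> complex) \<Rightarrow> real" where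
  "accept_prob m psi =
     (\<Sum>x<2^m. \<Sum>y<2^m.
        (cmod (psi (0 + 2 * x) (0 + 2 * y) + psi (1 + 2 * y) (1 + 2 * x)))\<^sup>2 / 2
      + (cmod (psi (0 + 2 * x) (1 + 2 * y) + psi (1 + 2 * y) (0 + 2 * x)))\<^sup>2 / 2)"

end

theory Submission
  imports Defs "Jordan_Normal_Form.Determinant"
begin

lemma unitary_rows:
  assumes "is_unitary d U"
  shows "\<forall>i<d. \<forall>j<d. (\<Sum>k<d. U i k * cnj (U j k)) = (if i = j then 1 else 0)"
proof -
  define X where "X = mat d d (\<lambda>(i,j). cnj (U j i))"
  define Y where "Y = mat d d (\<lambda>(i,j). U i j)"
  have XC: "X \<in> carrier_mat d d" and YC: "Y \<in> carrier_mat d d" unfolding X_def Y_def by auto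
  have "X * Y = 1\<^sub>m d"
  proof (rule eq_matI)
    fix i j assume "i < dim_row (1\<^sub>m d :: complex mat)" "j < dim_col (1\<^sub>m d :: complex mat)"
    then have ij: "i < d" "j < d" by auto
    have "(X * Y) $$ (i,j) = (\<Sum>k<d. cnj (U k i) * U k j)"
      using ij unfolding X_def Y_def
      by (auto simp: scalar_prod_def lessThan_atLeast0 intro!: sum.cong)
    also have "\<dots> = 1\<^sub>m d $$ (i,j)" using assms ij unfolding is_unitary_def by auto
    finally show "(X * Y) $$ (i,j) = 1\<^sub>m d $$ (i,j)" .
  qed (auto simp: X_def Y_def)
  then have YX: "Y * X = 1\<^sub>m d" using mat_mult_left_right_inverse[OF XC YC] by blast
  show ?thesis
  proof (intro allI impI)
    fix i j assume ij: "i < d" "j < d"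
    have "(\<Sum>k<d. U i k * cnj (U j k)) = (Y * X) $$ (i,j)"
      using ij unfolding X_def Y_def
      by (auto simp: scalar_prod_def lessThan_atLeast0 intro!: sum.cong)
    also have "\<dots> = (if i = j then 1 else 0)" using YX ij by simp
    finally show "(\<Sum>k<d. U i k * cnj (U j k)) = (if i = j then 1 else 0)" .
  qed
qed

lemma sum_split2: "(\<Sum>k<2*N. f k) = (\<Sum>i<N. f (2*i) + f (2*i+1))" for f :: "nat \<Rightarrow> 'a::comm_monoid_add"
  by (induction N) (auto simp: add.assoc)


definition blk :: "nat \<Rightarrow> cmat \<Rightarrow> cmat \<Rightarrow> cmat" where
  "blk N M0 M1 = (\<lambda>x y. if x < 2*N \<and> y < 2*N \<and> x mod 2 = y mod 2 then
      (if x mod 2 = 0 then M0 (x div 2) (y div 2) else M1 (x div 2) (y div 2)) else 0)"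

lemma blk_even_even: "x < N \<Longrightarrow> y < N \<Longrightarrow> blk N M0 M1 (2*x) (2*y) = M0 x y"
  by (simp add: blk_def)
lemma blk_odd_odd: "x < N \<Longrightarrow> y < N \<Longrightarrow> blk N M0 M1 (2*x+1) (2*y+1) = M1 x y"
  by (simp add: blk_def)
lemma blk_even_odd: "blk N M0 M1 (2*x) (2*y+1) = 0"
  by (simp add: blk_def)
lemma blk_odd_even: "blk N M0 M1 (2*x+1) (2*y) = 0"
  by (simp add: blk_def)

lemma blk_odd_odd': "x < N \<Longrightarrow> y < N \<Longrightarrow> blk N M0 M1 (Suc (2*x)) (Suc (2*y)) = M1 x y"
  by (simp add: blk_def)
lemma blk_even_odd': "blk N M0 M1 (2*x) (Suc (2*y)) = 0"
  by (simp add: blk_def)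
lemma blk_odd_even': "blk N M0 M1 (Suc (2*x)) (2*y) = 0"
  by (simp add: blk_def)
lemmas blk_simps = blk_even_even blk_odd_odd blk_even_odd blk_odd_even blk_odd_odd' blk_even_odd' blk_odd_even'

lemma nat_split2: fixes i :: nat obtains i' a where "i = 2*i' + a" "a = 0 \<or> a = 1"
proof -
  have "i = 2*(i div 2) + i mod 2" by simp
  moreover have "i mod 2 = 0 \<or> i mod 2 = 1" by auto
  ultimately show ?thesis by (rule that[of "i div 2" "i mod 2"])
qed

lemma blk_unitary:
  assumes U0: "is_unitary N M0" and U1: "is_unitary N M1"
  shows "is_unitary (2*N) (blk N M0 M1)"
  unfolding is_unitary_def
proof (intro allI impI)
  fix i j assume i: "i < 2*N" and j: "j < 2*N"
  obtain i' a where ia: "i = 2*i' + a" "a = 0 \<or> a = 1" by (rule nat_split2)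
  obtain j' b where jb: "j = 2*j' + b" "b = 0 \<or> b = 1" by (rule nat_split2)
  have i': "i' < N" using i ia by auto
  have j': "j' < N" using j jb by auto
  have S: "(\<Sum>k<2*N. cnj (blk N M0 M1 k i) * blk N M0 M1 k j)
     = (\<Sum>k<N. cnj (blk N M0 M1 (2*k) i) * blk N M0 M1 (2*k) j
              + cnj (blk N M0 M1 (2*k+1) i) * blk N M0 M1 (2*k+1) j)"
    by (rule sum_split2)
  have "(\<Sum>k<N. cnj (blk N M0 M1 (2*k) i) * blk N M0 M1 (2*k) j
              + cnj (blk N M0 M1 (2*k+1) i) * blk N M0 M1 (2*k+1) j) = (if i = j then 1 else 0)"
    using ia(2) jb(2)
  proof (elim disjE)
    assume "a = 0" "b = 0"
    have "\<And>k. k \<in> {..<N} \<Longrightarrow> cnj (blk N M0 M1 (2*k) i) * blk N M0 M1 (2*k) j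
              + cnj (blk N M0 M1 (2*k+1) i) * blk N M0 M1 (2*k+1) j = cnj (M0 k i') * M0 k j'"
      unfolding ia jb using \<open>a = 0\<close> \<open>b = 0\<close> i' j'
      by (simp add: blk_simps; presburger)
    then have "(\<Sum>k<N. cnj (blk N M0 M1 (2*k) i) * blk N M0 M1 (2*k) j
              + cnj (blk N M0 M1 (2*k+1) i) * blk N M0 M1 (2*k+1) j) = (\<Sum>k<N. cnj (M0 k i') * M0 k j')"
      by (rule sum.cong[OF refl])
    then show ?thesis using U0 i' j' unfolding is_unitary_def ia jb \<open>a = 0\<close> \<open>b = 0\<close> by simp
  next
    assume "a = 0" "b = 1"
    then show ?thesis using i' j' unfolding ia jb
      by (simp add: blk_simps; presburger)
  next
    assume "a = 1" "b = 0"
    then show ?thesis using i' j' unfolding ia jb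
      by (simp add: blk_simps; presburger)
  next
    assume "a = 1" "b = 1"
    have "\<And>k. k \<in> {..<N} \<Longrightarrow> cnj (blk N M0 M1 (2*k) i) * blk N M0 M1 (2*k) j
              + cnj (blk N M0 M1 (2*k+1) i) * blk N M0 M1 (2*k+1) j = cnj (M1 k i') * M1 k j'"
      unfolding ia jb using \<open>a = 1\<close> \<open>b = 1\<close> i' j'
      by (simp add: blk_simps; presburger)
    then have "(\<Sum>k<N. cnj (blk N M0 M1 (2*k) i) * blk N M0 M1 (2*k) j
              + cnj (blk N M0 M1 (2*k+1) i) * blk N M0 M1 (2*k+1) j) = (\<Sum>k<N. cnj (M1 k i') * M1 k j')"
      by (rule sum.cong[OF refl])
    then show ?thesis using U1 i' j' unfolding is_unitary_def ia jb \<open>a = 1\<close> \<open>b = 1\<close> by simp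
  qed
  then show "(\<Sum>k<2*N. cnj (blk N M0 M1 k i) * blk N M0 M1 k j) = (if i = j then 1 else 0)"
    using S by simp
qed


lemma joint_state_eq:
  "joint_state k k UA UB x y = 1 / complex_of_real (sqrt (2^k)) * (\<Sum>z<2^k. UA x z * UB y z)"
proof -
  have "joint_state k k UA UB x y = (\<Sum>z<2^k. UA x z * UB y z * (1 / complex_of_real (sqrt (2^k))))"
    unfolding joint_state_def epr_state_def
    by (rule sum.cong[OF refl]) (simp add: if_distrib cong: if_cong)
  then show ?thesis by (simp add: sum_distrib_left sum_distrib_right mult.commute)
qed

lemma psi_formula:
  assumes a: "a < 2" and b: "b < 2" and x: "x < 2^n" and y: "y < 2^n"
  shows "joint_state (n+1) (n+1) (blk (2^n) Pa Pb) (blk (2^n) Qa Qb) (a + 2*x) (b + 2*y)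
    = 1 / complex_of_real (sqrt (2 * real (2^n))) *
      (\<Sum>i<2^n. (if a = 0 \<and> b = 0 then Pa x i * Qa y i else 0)
              + (if a = 1 \<and> b = 1 then Pb x i * Qb y i else 0))"
proof -
  let ?N = "2^n :: nat"
  have e: "(2::nat)^(n+1) = 2 * ?N" by simp
  have "(\<Sum>z<2^(n+1). blk ?N Pa Pb (a + 2*x) z * blk ?N Qa Qb (b + 2*y) z)
      = (\<Sum>i<?N. blk ?N Pa Pb (a + 2*x) (2*i) * blk ?N Qa Qb (b + 2*y) (2*i)
              + blk ?N Pa Pb (a + 2*x) (2*i+1) * blk ?N Qa Qb (b + 2*y) (2*i+1))"
    unfolding e by (rule sum_split2)
  also have "\<dots> = (\<Sum>i<?N. (if a = 0 \<and> b = 0 then Pa x i * Qa y i else 0)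
              + (if a = 1 \<and> b = 1 then Pb x i * Qb y i else 0))"
  proof (rule sum.cong[OF refl])
    fix i assume "i \<in> {..<?N}"
    then have i: "i < ?N" by simp
    show "blk ?N Pa Pb (a + 2*x) (2*i) * blk ?N Qa Qb (b + 2*y) (2*i)
              + blk ?N Pa Pb (a + 2*x) (2*i+1) * blk ?N Qa Qb (b + 2*y) (2*i+1)
        = (if a = 0 \<and> b = 0 then Pa x i * Qa y i else 0)
              + (if a = 1 \<and> b = 1 then Pb x i * Qb y i else 0)"
      using a b x y i
      by (cases "a = 0"; cases "b = 0") (auto simp: blk_simps less_2_cases_iff)
  qed
  finally show ?thesis unfolding joint_state_eq
    by (simp add: e)
qed


lemma norm_one:
  assumes "(\<Sum>k<d. f k * cnj (f k)) = 1"
  shows "(\<Sum>k<d. (cmod (f k))\<^sup>2) = 1"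
proof -
  have "complex_of_real (\<Sum>k<d. (cmod (f k))\<^sup>2) = (\<Sum>k<d. f k * cnj (f k))"
    unfolding of_real_sum by (intro sum.cong refl) (rule complex_norm_square)
  then show ?thesis using assms of_real_eq_1_iff by metis
qed

lemma frob:
  assumes A: "is_unitary N A" and B: "is_unitary N B"
  shows "(\<Sum>y<N. \<Sum>x<N. (cmod (mmul N A B x y))\<^sup>2) = real N"
proof -
  have col: "(\<Sum>x<N. (cmod (mmul N A B x y))\<^sup>2) = 1" if y: "y < N" for y
  proof (rule norm_one)
    have "(\<Sum>x<N. mmul N A B x y * cnj (mmul N A B x y))
        = (\<Sum>x<N. \<Sum>l'<N. \<Sum>l<N. A x l * (B l y * (cnj (A x l') * cnj (B l' y))))"
      unfolding mmul_def by (simp add: sum_distrib_left sum_distrib_right cnj_sum mult_ac)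
    also have "\<dots> = (\<Sum>l'<N. \<Sum>x<N. \<Sum>l<N. A x l * (B l y * (cnj (A x l') * cnj (B l' y))))"
      by (rule sum.swap)
    also have "\<dots> = (\<Sum>l'<N. \<Sum>l<N. \<Sum>x<N. A x l * (B l y * (cnj (A x l') * cnj (B l' y))))"
      by (intro sum.cong refl sum.swap)
    also have "\<dots> = (\<Sum>l'<N. \<Sum>l<N. (\<Sum>x<N. cnj (A x l') * A x l) * (B l y * cnj (B l' y)))"
      by (intro sum.cong refl) (simp add: sum_distrib_left sum_distrib_right mult_ac)
    also have "\<dots> = (\<Sum>l'<N. \<Sum>l<N. (if l' = l then 1 else 0) * (B l y * cnj (B l' y)))"
    proof (intro sum.cong refl)
      fix l l' assume "l \<in> {..<N}" "l' \<in> {..<N}"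
      then show "(\<Sum>x<N. cnj (A x l') * A x l) * (B l y * cnj (B l' y))
          = (if l' = l then 1 else 0) * (B l y * cnj (B l' y))"
        using A unfolding is_unitary_def by auto
    qed
    also have "\<dots> = (\<Sum>l'<N. B l' y * cnj (B l' y))"
    proof (intro sum.cong refl)
      fix l' assume l': "l' \<in> {..<N}"
      have "(\<Sum>l<N. (if l' = l then 1 else 0) * (B l y * cnj (B l' y)))
          = (\<Sum>l<N. if l' = l then B l y * cnj (B l' y) else 0)"
        by (intro sum.cong refl) simp
      also have "\<dots> = B l' y * cnj (B l' y)" using l' by (simp add: sum.delta)
      finally show "(\<Sum>l<N. (if l' = l then 1 else 0) * (B l y * cnj (B l' y))) = B l' y * cnj (B l' y)" .
    qed
    also have "\<dots> = (\<Sum>l<N. cnj (B l y) * B l y)"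
      by (simp add: mult.commute)
    also have "\<dots> = 1" using B y unfolding is_unitary_def by auto
    finally show "(\<Sum>x<N. mmul N A B x y * cnj (mmul N A B x y)) = 1" .
  qed
  then show ?thesis by simp
qed

lemma trace_eq0:
  "mtrace N (mmul N (mmul N P C) D) = (\<Sum>x<N. \<Sum>y<N. P x y * mmul N C D y x)"
proof -
  have "mtrace N (mmul N (mmul N P C) D)
      = (\<Sum>x<N. \<Sum>k<N. \<Sum>y<N. P x y * C y k * D k x)"
    unfolding mtrace_def mmul_def
    by (simp add: sum_distrib_right)
  also have "\<dots> = (\<Sum>x<N. \<Sum>y<N. \<Sum>k<N. P x y * C y k * D k x)"
    by (rule sum.cong[OF refl]) (rule sum.swap)
  also have "\<dots> = (\<Sum>x<N. \<Sum>y<N. P x y * mmul N C D y x)"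
    unfolding mmul_def by (simp add: sum_distrib_left mult.assoc)
  finally show ?thesis .
qed

lemma trace_eq:
  "mtrace N (mmul N (mmul N (mmul N A B) C) D) = (\<Sum>x<N. \<Sum>y<N. mmul N A B x y * mmul N C D y x)"
  by (rule trace_eq0)

lemma cmod_cnj_add: "(cmod (cnj w + z))\<^sup>2 = (cmod w)\<^sup>2 + (cmod z)\<^sup>2 + 2 * Re (w * z)"
  unfolding cmod_power2 by (simp add: power2_eq_square algebra_simps)


lemma accept_val:
  fixes n :: nat and A B C D :: cmat
  defines "N \<equiv> (2::nat)^n"
  assumes UA: "is_unitary N A" and UB: "is_unitary N B" and UC: "is_unitary N C" and UD: "is_unitary N D"
  shows "accept_prob n (joint_state (n+1) (n+1) (blk N (\<lambda>x i. cnj (A x i)) C) (blk N (\<lambda>y i. cnj (B i y)) (\<lambda>x i. D i x)))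
     = 1/2 + Re (mtrace N (mmul N (mmul N (mmul N A B) C) D)) / (2 * real N)"
proof -
  let ?psi = "joint_state (n+1) (n+1) (blk N (\<lambda>x i. cnj (A x i)) C) (blk N (\<lambda>y i. cnj (B i y)) (\<lambda>x i. D i x))"
  define s where "s = 1 / complex_of_real (sqrt (2 * real N))"
  have Npos: "real N > 0" unfolding N_def by simp
  have p00: "?psi (0 + 2*x) (0 + 2*y) = s * cnj (mmul N A B x y)" if "x < N" "y < N" for x y
    using psi_formula[where a=0 and b=0 and x=x and y=y and n=n and Pa="\<lambda>x i. cnj (A x i)" and Pb=C
       and Qa="\<lambda>y i. cnj (B i y)" and Qb="\<lambda>x i. D i x"] that
    unfolding N_def s_def mmul_def by (simp add: cnj_sum)
  have p11: "?psi (1 + 2*y) (1 + 2*x) = s * mmul N C D y x" if "x < N" "y < N" for x y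
    using psi_formula[where a=1 and b=1 and x=y and y=x and n=n and Pa="\<lambda>x i. cnj (A x i)" and Pb=C
       and Qa="\<lambda>y i. cnj (B i y)" and Qb="\<lambda>x i. D i x"] that
    unfolding N_def s_def mmul_def by simp
  have p01: "?psi (0 + 2*x) (1 + 2*y) = 0" if "x < N" "y < N" for x y
    using psi_formula[where a=0 and b=1 and x=x and y=y and n=n and Pa="\<lambda>x i. cnj (A x i)" and Pb=C
       and Qa="\<lambda>y i. cnj (B i y)" and Qb="\<lambda>x i. D i x"] that
    unfolding N_def by simp
  have p10: "?psi (1 + 2*y) (0 + 2*x) = 0" if "x < N" "y < N" for x y
    using psi_formula[where a=1 and b=0 and x=y and y=x and n=n and Pa="\<lambda>x i. cnj (A x i)" and Pb=C
       and Qa="\<lambda>y i. cnj (B i y)" and Qb="\<lambda>x i. D i x"] that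
    unfolding N_def by simp
  have s2: "(cmod s)\<^sup>2 = 1 / (2 * real N)"
    unfolding s_def using Npos by (simp add: norm_divide power_divide)
  have "accept_prob n ?psi = (\<Sum>x<N. \<Sum>y<N. (cmod (s * (cnj (mmul N A B x y) + mmul N C D y x)))\<^sup>2 / 2)"
    unfolding accept_prob_def N_def[symmetric]
    by (intro sum.cong refl) (simp only: lessThan_iff p00 p11 p01 p10 distrib_left, simp)
  also have "\<dots> = (\<Sum>x<N. \<Sum>y<N. (1 / (4 * real N)) * ((cmod (mmul N A B x y))\<^sup>2 + (cmod (mmul N C D y x))\<^sup>2
        + 2 * Re (mmul N A B x y * mmul N C D y x)))"
    by (intro sum.cong refl) (simp add: norm_mult power_mult_distrib s2 cmod_cnj_add)
  also have "\<dots> = (1 / (4 * real N)) * ((\<Sum>x<N. \<Sum>y<N. (cmod (mmul N A B x y))\<^sup>2)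
        + (\<Sum>x<N. \<Sum>y<N. (cmod (mmul N C D y x))\<^sup>2)
        + 2 * Re (\<Sum>x<N. \<Sum>y<N. mmul N A B x y * mmul N C D y x))"
    by (simp add: sum_distrib_left sum.distrib Re_sum distrib_left)
  also have "(\<Sum>x<N. \<Sum>y<N. (cmod (mmul N A B x y))\<^sup>2) = real N"
    using frob[OF UA UB] sum.swap[of "\<lambda>x y. (cmod (mmul N A B x y))\<^sup>2" "{..<N}" "{..<N}"] by simp
  also have "(\<Sum>x<N. \<Sum>y<N. (cmod (mmul N C D y x))\<^sup>2) = real N"
    using frob[OF UC UD] by simp
  also have "(\<Sum>x<N. \<Sum>y<N. mmul N A B x y * mmul N C D y x) = mtrace N (mmul N (mmul N (mmul N A B) C) D)"
    by (rule trace_eq[symmetric])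
  finally show ?thesis using Npos by (simp add: field_simps)
qed


lemma conj_unitary: "is_unitary N A \<Longrightarrow> is_unitary N (\<lambda>x i. cnj (A x i))"
  unfolding is_unitary_def
proof (intro allI impI)
  fix i j assume H: "\<forall>i<N. \<forall>j<N. (\<Sum>k<N. cnj (A k i) * A k j) = (if i = j then 1 else 0)"
    and ij: "i < N" "j < N"
  have "(\<Sum>k<N. cnj (cnj (A k i)) * cnj (A k j)) = cnj (\<Sum>k<N. cnj (A k i) * A k j)"
    by (simp add: cnj_sum mult.commute)
  then show "(\<Sum>k<N. cnj (cnj (A k i)) * cnj (A k j)) = (if i = j then 1 else 0)"
    using H ij by simp
qed

lemma adj_unitary: "is_unitary N B \<Longrightarrow> is_unitary N (\<lambda>y i. cnj (B i y))"
  using unitary_rows[of N B] unfolding is_unitary_def by simp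

lemma tr_unitary: "is_unitary N D \<Longrightarrow> is_unitary N (\<lambda>x i. D i x)"
proof -
  assume "is_unitary N D"
  then have R: "\<forall>i<N. \<forall>j<N. (\<Sum>k<N. D i k * cnj (D j k)) = (if i = j then 1 else 0)"
    by (rule unitary_rows)
  show ?thesis unfolding is_unitary_def
  proof (intro allI impI)
    fix i j assume ij: "i < N" "j < N"
    have "(\<Sum>k<N. cnj (D i k) * D j k) = cnj (\<Sum>k<N. D i k * cnj (D j k))"
      by (simp add: cnj_sum)
    then show "(\<Sum>k<N. cnj (D i k) * D j k) = (if i = j then 1 else 0)"
      using R ij by simp
  qed
qed

lemma SU_unitary: "A \<in> SU N \<Longrightarrow> is_unitary N A"
  by (simp add: SU_def)

theorem theorem4p2:
  "\<exists>c::real. c > 0 \<and>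
     (\<forall>n::nat. n \<ge> 1 \<longrightarrow>
       (let N = 2 ^ n in
        \<exists>(k::nat) (m::nat) (UA :: cmat \<Rightarrow> cmat \<Rightarrow> cmat) (UB :: cmat \<Rightarrow> cmat \<Rightarrow> cmat).
          real n \<le> c * real k \<and> real k \<le> c * real n \<and> k \<le> m + 1 \<and>
          real (2 * (m + 1)) \<le> c * real n \<and>
          (\<forall>A\<in>SU N. \<forall>C\<in>SU N. is_unitary (2 ^ (m + 1)) (UA A C)) \<and>
          (\<forall>B\<in>SU N. \<forall>D\<in>SU N. is_unitary (2 ^ (m + 1)) (UB B D)) \<and>
          (\<forall>A\<in>SU N. \<forall>B\<in>SU N. \<forall>C\<in>SU N. \<forall>D\<in>SU N.
             (let psi = joint_state (m + 1) k (UA A C) (UB B D);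
                  t = mtrace N (mmul N (mmul N (mmul N A B) C) D) in
              fingerprint_form N m psi \<and>
              (Im t = 0 \<and> Re t \<ge> 0.9 * real N \<longrightarrow> accept_prob m psi \<ge> 0.95) \<and>
              (Im t = 0 \<and> Re t \<le> 0.1 * real N \<longrightarrow> accept_prob m psi \<le> 0.55)))))"
proof (intro exI[of _ 4] conjI allI impI)
  show "(4::real) > 0" by simp
  fix n :: nat assume n1: "n \<ge> 1"
  define N where "N = (2::nat)^n"
  have e: "(2::nat)^(n+1) = 2 * N" unfolding N_def by simp
  have Npos: "real N > 0" unfolding N_def by simp
  define UA :: "cmat \<Rightarrow> cmat \<Rightarrow> cmat" where "UA = (\<lambda>A C. blk N (\<lambda>x i. cnj (A x i)) C)"
  define UB :: "cmat \<Rightarrow> cmat \<Rightarrow> cmat" where "UB = (\<lambda>B D. blk N (\<lambda>y i. cnj (B i y)) (\<lambda>x i. D i x))"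
  have main: "real n \<le> 4 * real (n+1) \<and> real (n+1) \<le> 4 * real n \<and> n+1 \<le> n + 1 \<and>
          real (2 * (n + 1)) \<le> 4 * real n \<and>
          (\<forall>A\<in>SU N. \<forall>C\<in>SU N. is_unitary (2 ^ (n + 1)) (UA A C)) \<and>
          (\<forall>B\<in>SU N. \<forall>D\<in>SU N. is_unitary (2 ^ (n + 1)) (UB B D)) \<and>
          (\<forall>A\<in>SU N. \<forall>B\<in>SU N. \<forall>C\<in>SU N. \<forall>D\<in>SU N.
             (let psi = joint_state (n + 1) (n+1) (UA A C) (UB B D);
                  t = mtrace N (mmul N (mmul N (mmul N A B) C) D) in
              fingerprint_form N n psi \<and>
              (Im t = 0 \<and> Re t \<ge> 0.9 * real N \<longrightarrow> accept_prob n psi \<ge> 0.95) \<and>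
              (Im t = 0 \<and> Re t \<le> 0.1 * real N \<longrightarrow> accept_prob n psi \<le> 0.55)))"
  proof (intro conjI ballI)
    show "real n \<le> 4 * real (n+1)" by simp
    show "real (n+1) \<le> 4 * real n" using n1 by simp
    show "n+1 \<le> n+1" by simp
    show "real (2 * (n + 1)) \<le> 4 * real n" using n1 by simp
  next
    fix A C assume A: "A \<in> SU N" and C: "C \<in> SU N"
    show "is_unitary (2 ^ (n + 1)) (UA A C)" unfolding UA_def e
      by (rule blk_unitary[OF conj_unitary[OF SU_unitary[OF A]] SU_unitary[OF C]])
  next
    fix B D assume B: "B \<in> SU N" and D: "D \<in> SU N"
    show "is_unitary (2 ^ (n + 1)) (UB B D)" unfolding UB_def e
      by (rule blk_unitary[OF adj_unitary[OF SU_unitary[OF B]] tr_unitary[OF SU_unitary[OF D]]])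
  next
    fix A B C D assume A: "A \<in> SU N" and B: "B \<in> SU N" and C: "C \<in> SU N" and D: "D \<in> SU N"
    have uA: "is_unitary N A" and uB: "is_unitary N B" and uC: "is_unitary N C" and uD: "is_unitary N D"
      using A B C D by (auto intro: SU_unitary)
    define psi where "psi = joint_state (n + 1) (n+1) (UA A C) (UB B D)"
    define t where "t = mtrace N (mmul N (mmul N (mmul N A B) C) D)"
    have acc: "accept_prob n psi = 1/2 + Re t / (2 * real N)"
      unfolding psi_def t_def UA_def UB_def N_def by (rule accept_val[OF uA[unfolded N_def] uB[unfolded N_def] uC[unfolded N_def] uD[unfolded N_def]])
    have rows_B: "\<forall>i<N. \<forall>j<N. (\<Sum>k<N. B i k * cnj (B j k)) = (if i = j then 1 else 0)"
      by (rule unitary_rows[OF uB])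
    have rows_D: "\<forall>i<N. \<forall>j<N. (\<Sum>k<N. D i k * cnj (D j k)) = (if i = j then 1 else 0)"
      by (rule unitary_rows[OF uD])
    have ff: "fingerprint_form N n psi"
      unfolding fingerprint_form_def
    proof (rule exI[of _ "\<lambda>i x. cnj (A x i)"], rule exI[of _ "\<lambda>i x. C x i"],
        rule exI[of _ "\<lambda>i y. cnj (B i y)"], rule exI[of _ "\<lambda>i y. D i y"], intro conjI allI impI)
      fix i assume i: "i < N"
      show "vnorm2 (2^n) (\<lambda>x. cnj (A x i)) = 1" unfolding vnorm2_def N_def[symmetric]
        using norm_one[of "\<lambda>x. A x i" N] uA i unfolding is_unitary_def by (simp add: mult.commute)
    next
      fix i assume i: "i < N"
      show "vnorm2 (2^n) (\<lambda>x. C x i) = 1" unfolding vnorm2_def N_def[symmetric]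
        using norm_one[of "\<lambda>x. C x i" N] uC i unfolding is_unitary_def by (simp add: mult.commute)
    next
      fix i assume i: "i < N"
      show "vnorm2 (2^n) (\<lambda>y. cnj (B i y)) = 1" unfolding vnorm2_def N_def[symmetric]
        using norm_one[of "\<lambda>y. B i y" N] rows_B i by simp
    next
      fix i assume i: "i < N"
      show "vnorm2 (2^n) (\<lambda>y. D i y) = 1" unfolding vnorm2_def N_def[symmetric]
        using norm_one[of "\<lambda>y. D i y" N] rows_D i by simp
    next
      fix a b x y assume "a < (2::nat)" "b < (2::nat)" "x < (2::nat)^n" "y < (2::nat)^n"
      then show "psi (a + 2 * x) (b + 2 * y) =
             1 / complex_of_real (sqrt (2 * real N)) *
             (\<Sum>i<N. (if a = 0 \<and> b = 0 then cnj (A x i) * cnj (B i y) else 0)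
                    + (if a = 1 \<and> b = 1 then C x i * D i y else 0))"
        unfolding psi_def UA_def UB_def N_def by (rule psi_formula)
    qed
    show "let psi = joint_state (n + 1) (n+1) (UA A C) (UB B D);
                  t = mtrace N (mmul N (mmul N (mmul N A B) C) D) in
              fingerprint_form N n psi \<and>
              (Im t = 0 \<and> Re t \<ge> 0.9 * real N \<longrightarrow> accept_prob n psi \<ge> 0.95) \<and>
              (Im t = 0 \<and> Re t \<le> 0.1 * real N \<longrightarrow> accept_prob n psi \<le> 0.55)"
      unfolding Let_def psi_def[symmetric] t_def[symmetric]
    proof (intro conjI impI)
      show "fingerprint_form N n psi" by (rule ff)
    next
      assume "Im t = 0 \<and> Re t \<ge> 0.9 * real N"
      then have "9/20 * (2 * real N) \<le> Re t" by simp
      then have "9/20 \<le> Re t / (2 * real N)"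
        using pos_le_divide_eq[of "2 * real N" "9/20" "Re t"] Npos by linarith
      moreover have "(0.95::real) = 19/20" by simp
      ultimately show "accept_prob n psi \<ge> 0.95" using acc by linarith
    next
      assume "Im t = 0 \<and> Re t \<le> 0.1 * real N"
      then have "Re t \<le> 1/20 * (2 * real N)" by simp
      then have "Re t / (2 * real N) \<le> 1/20"
        using pos_divide_le_eq[of "2 * real N" "Re t" "1/20"] Npos by linarith
      moreover have "(0.55::real) = 11/20" by simp
      ultimately show "accept_prob n psi \<le> 0.55" using acc by linarith
    qed
  qed
  show "let N = 2 ^ n in
        \<exists>(k::nat) (m::nat) (UA :: cmat \<Rightarrow> cmat \<Rightarrow> cmat) (UB :: cmat \<Rightarrow> cmat \<Rightarrow> cmat).
          real n \<le> 4 * real k \<and> real k \<le> 4 * real n \<and> k \<le> m + 1 \<and>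
          real (2 * (m + 1)) \<le> 4 * real n \<and>
          (\<forall>A\<in>SU N. \<forall>C\<in>SU N. is_unitary (2 ^ (m + 1)) (UA A C)) \<and>
          (\<forall>B\<in>SU N. \<forall>D\<in>SU N. is_unitary (2 ^ (m + 1)) (UB B D)) \<and>
          (\<forall>A\<in>SU N. \<forall>B\<in>SU N. \<forall>C\<in>SU N. \<forall>D\<in>SU N.
             (let psi = joint_state (m + 1) k (UA A C) (UB B D);
                  t = mtrace N (mmul N (mmul N (mmul N A B) C) D) in
              fingerprint_form N m psi \<and>
              (Im t = 0 \<and> Re t \<ge> 0.9 * real N \<longrightarrow> accept_prob m psi \<ge> 0.95) \<and>
              (Im t = 0 \<and> Re t \<le> 0.1 * real N \<longrightarrow> accept_prob m psi \<le> 0.55)))"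
    unfolding N_def[symmetric] Let_def[of N]
    by (rule exI[of _ "n+1"], rule exI[of _ n], rule exI[of _ UA], rule exI[of _ UB], rule main)
qed

end
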